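(* Let $m\ge 1$ and $d_k\ge 1$ be integers, let $u\in\mathbb{R}^m$ with $\|u\|=1$, and let $g_1,\ldots,g_{d_k}\in\mathbb{R}^m$ be nonzero vectors such that no $g_i$ is colinear with $u$. Consider the problem $$\min_{V_1,\ldots,V_{d_k}\in\mathbb{R}^m}\ \sum_{i=1}^{d_k} V_i^T g_i \quad\text{subject to}\quad u^T\Big(\sum_{j=1}^{d_k} V_j\Big)=2-d_k,\qquad \|V_i\|=1\ \ (i=1,\ldots,d_k).$$ Let $\phi_i$ denote the angle between $g_i$ and $u$ (so $\cos\phi_i = g_i^Tu/\|g_i\|$). Then the Lagrangian dual function of this problem, obtained by dualizing the linear constraint $u^T\sum_j V_j = 2-d_k$ with a multiplier $\lambda\in\mathbb{R}$ (the norm constraints being kept), is $$h(\lambda) = -\sum_{i=1}^{d_k}\sqrt{\|g_i\|^2 + 2\lambda\|g_i\|\cos(\phi_i)+\lambda^2} + (d_k-2)\lambda .$$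
   Context: The Lagrangian used is $L(\lambda,V)=\sum_i V_i^Tg_i+\lambda\big(u^T\sum_j V_j + d_k-2\big)$ and the dual function is its minimum over the unit-norm vectors $V_i$. This problem is the block subproblem for one discrete variable $x_k$ with $d_k$ values in a low-rank SDP relaxation of a pairwise graphical model; $u$ plays the role of the fixed last row $V_{d+1}$ of the low-rank factor. $\|\cdot\|$ is the Euclidean norm. *)

theory Defs
  imports "HOL-Analysis.Analysis"
begin

text \<open>Block subproblem: d unit vectors V 1, ..., V d in the Euclidean space 'a (of dimension
  m = DIM('a)), data vectors g 1, ..., g d and a unit vector u.\<close>

definition lagrangian :: "nat \<Rightarrow> (nat \<Rightarrow> 'a::euclidean_space) \<Rightarrow> 'a \<Rightarrow> real \<Rightarrow> (nat \<Rightarrow> 'a) \<Rightarrow> real" where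
  "lagrangian d g u lam V =
     (\<Sum>i=1..d. V i \<bullet> g i) + lam * (u \<bullet> (\<Sum>j=1..d. V j) + real d - 2)"

definition dual_fun :: "nat \<Rightarrow> (nat \<Rightarrow> 'a::euclidean_space) \<Rightarrow> 'a \<Rightarrow> real \<Rightarrow> real" where
  "dual_fun d g u lam = (INF V \<in> {V. \<forall>i\<in>{1..d}. norm (V i) = 1}. lagrangian d g u lam V)"

definition cos_angle :: "'a::euclidean_space \<Rightarrow> 'a \<Rightarrow> real" where
  "cos_angle x y = (x \<bullet> y) / (norm x * norm y)"

end

theory Submission
  imports Defs
begin

lemma lag_rewrite:
  fixes u :: "'a::euclidean_space"
  shows "lagrangian d g u lam V = (\<Sum>i=1..d. V i \<bullet> (g i + lam *\<^sub>R u)) + (real d - 2) * lam"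
proof -
  have "u \<bullet> (\<Sum>j=1..d. V j) = (\<Sum>j=1..d. V j \<bullet> u)"
    by (simp add: inner_sum_right inner_commute)
  then show ?thesis
    unfolding lagrangian_def
    by (simp add: inner_add_right sum.distrib sum_distrib_left algebra_simps)
qed

theorem theorem3:
  fixes d :: nat and u :: "'a::euclidean_space" and g :: "nat \<Rightarrow> 'a"
  assumes "d \<ge> 1"
    and "norm u = 1"
    and "\<And>i. i \<in> {1..d} \<Longrightarrow> g i \<noteq> 0"
    and "\<And>i. i \<in> {1..d} \<Longrightarrow> \<not> collinear {0, g i, u}"
  shows "dual_fun d g u lam =
           - (\<Sum>i=1..d. sqrt ((norm (g i))\<^sup>2 + 2 * lam * norm (g i) * cos_angle (g i) u + lam\<^sup>2))
           + (real d - 2) * lam"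
proof -
  define w where "w i = g i + lam *\<^sub>R u" for i
  have nw: "norm (w i) = sqrt ((norm (g i))\<^sup>2 + 2 * lam * norm (g i) * cos_angle (g i) u + lam\<^sup>2)"
    if "i \<in> {1..d}" for i
  proof -
    have gn: "norm (g i) \<noteq> 0" using assms(3)[OF that] by simp
    have "(norm (w i))\<^sup>2 = (norm (g i))\<^sup>2 + 2 * lam * (g i \<bullet> u) + lam\<^sup>2"
    proof -
      have uu: "u \<bullet> u = 1" using assms(2) by (simp add: dot_square_norm)
      have "(norm (w i))\<^sup>2 = w i \<bullet> w i" by (simp add: dot_square_norm)
      also have "\<dots> = g i \<bullet> g i + 2 * lam * (g i \<bullet> u) + lam\<^sup>2 * (u \<bullet> u)"
        unfolding w_def by (simp add: inner_add_left inner_add_right inner_commute power2_eq_square algebra_simps)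
      finally show ?thesis using uu by (simp add: dot_square_norm)
    qed
    moreover have "norm (g i) * cos_angle (g i) u = g i \<bullet> u"
      unfolding cos_angle_def using gn assms(2) by simp
    ultimately show ?thesis
      by (metis norm_ge_zero real_sqrt_unique mult.assoc)
  qed
  let ?S = "{V. \<forall>i\<in>{1..d}. norm (V i) = (1::real)}"
  define V0 where "V0 i = (if w i = 0 then u else - (1 / norm (w i)) *\<^sub>R w i)" for i
  have V0S: "V0 \<in> ?S" using assms(2) by (auto simp: V0_def)
  have V0v: "V0 i \<bullet> w i = - norm (w i)" for i
    by (auto simp: V0_def inner_commute power2_norm_eq_inner[symmetric] power2_eq_square)
  have lb: "V i \<bullet> w i \<ge> - norm (w i)" if "V \<in> ?S" "i \<in> {1..d}" for V i
  proof -
    have "\<bar>V i \<bullet> w i\<bar> \<le> norm (V i) * norm (w i)" by (rule Cauchy_Schwarz_ineq2)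
    then show ?thesis using that by auto
  qed
  have "dual_fun d g u lam = - (\<Sum>i=1..d. norm (w i)) + (real d - 2) * lam"
    unfolding dual_fun_def lag_rewrite w_def[symmetric]
  proof (rule cInf_eq_minimum)
    show "- (\<Sum>i = 1..d. norm (w i)) + (real d - 2) * lam
      \<in> (\<lambda>V. (\<Sum>i = 1..d. V i \<bullet> w i) + (real d - 2) * lam) ` ?S"
      using V0S by (intro image_eqI[of _ _ V0]) (auto simp: V0v sum_negf)
  next
    fix y assume "y \<in> (\<lambda>V. (\<Sum>i = 1..d. V i \<bullet> w i) + (real d - 2) * lam) ` ?S"
    then obtain V where V: "V \<in> ?S" and y: "y = (\<Sum>i = 1..d. V i \<bullet> w i) + (real d - 2) * lam"
      by blast
    have "(\<Sum>i = 1..d. - norm (w i)) \<le> (\<Sum>i = 1..d. V i \<bullet> w i)"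
      by (rule sum_mono) (use lb V in auto)
    then show "- (\<Sum>i = 1..d. norm (w i)) + (real d - 2) * lam \<le> y"
      using y by (simp add: sum_negf)
  qed
  also have "(\<Sum>i=1..d. norm (w i)) = (\<Sum>i=1..d. sqrt ((norm (g i))\<^sup>2 + 2 * lam * norm (g i) * cos_angle (g i) u + lam\<^sup>2))"
    by (rule sum.cong) (auto simp: nw)
  finally show ?thesis .
qed

end
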